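(* Let $n\ge 2$, $1\le k\le n$, and let $\rho=\sum_{i=0}^k\lambda_i|D_n^i\rangle\langle D_n^i|$ with $\lambda_i\ge 0$, $\sum_{i=0}^k\lambda_i=1$, and suppose there is exactly one index $i_*\in\{0,\dots,k\}$ with $\lambda_{i_*}=0$ (i.e. $\lambda_{i_*}=0$ and $\lambda_i\neq0$ for all $i\in\{0,\dots,k\}\setminus\{i_*\}$). Then $$L(\rho)=k+\min\{(k-i_* )\bmod 2,\ n-k\}.$$
   Context: Let $[n]=\{1,\dots,n\}$ and $\mathcal H_{[n]}=(\mathbb C^2)^{\otimes n}$. For $S\subseteq[n]$ and a density matrix $\rho$ on $\mathcal H_{[n]}$, $\rho_S$ is the partial trace of $\rho$ over the qubits not in $S$. For a collection $\mathcal S$ of subsets of $[n]$, $\mathcal C(\rho,\mathcal S)=\{\sigma\text{ density matrix on }\mathcal H_{[n]}:\sigma_S=\rho_S\ \forall S\in\mathcal S\}$; $\mathcal S$ determines $\rho$ if $\mathcal C(\rho,\mathcal S)=\{\rho\}$. The state determination length is $L(\rho)=\min_{\mathcal S\text{ determines }\rho}\max_{S\in\mathcal S}|S|$. Dicke states: $|D_n^i\rangle=\binom{n}{i}^{-1/2}\sum_{s\in\{0,1\}^n,\ \sum_j s_j=i}|s_1\rangle\otimes\cdots\otimes|s_n\rangle$ for $i=0,\dots,n$. *)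

theory Defs
  imports Complex_Main "HOL-Library.Complex_Order"
begin

text \<open>The computational basis vector |s_1...s_n> of
  H_[n] is labelled by the set x = {j. s_j = 1} \<subseteq> {1..n}. An operator on H_[n]
  is a function nat set \<Rightarrow> nat set \<Rightarrow> complex (matrix entries), only its values
  on Pow {1..n} being relevant. For S \<subseteq> {1..n}, H_S has basis Pow S.\<close>

type_synonym op = "nat set \<Rightarrow> nat set \<Rightarrow> complex"

definition qubits :: "nat \<Rightarrow> nat set" where
  "qubits n = {1..n}"

definition density :: "nat \<Rightarrow> op \<Rightarrow> bool" where
  "density n \<rho> \<longleftrightarrow>
     (\<forall>x\<in>Pow (qubits n). \<forall>y\<in>Pow (qubits n). \<rho> y x = cnj (\<rho> x y)) \<and>
     (\<forall>v :: nat set \<Rightarrow> complex.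
        0 \<le> (\<Sum>x\<in>Pow (qubits n). \<Sum>y\<in>Pow (qubits n). cnj (v x) * \<rho> x y * v y)) \<and>
     (\<Sum>x\<in>Pow (qubits n). \<rho> x x) = 1"

definition ptrace :: "nat \<Rightarrow> op \<Rightarrow> nat set \<Rightarrow> op" where
  "ptrace n \<rho> S a b = (\<Sum>c\<in>Pow (qubits n - S). \<rho> (a \<union> c) (b \<union> c))"

definition compatible :: "nat \<Rightarrow> op \<Rightarrow> nat set set \<Rightarrow> op set" where
  "compatible n \<rho> \<S> = {\<sigma>. density n \<sigma> \<and>
      (\<forall>S\<in>\<S>. \<forall>a\<in>Pow S. \<forall>b\<in>Pow S. ptrace n \<sigma> S a b = ptrace n \<rho> S a b)}"

definition determines :: "nat \<Rightarrow> nat set set \<Rightarrow> op \<Rightarrow> bool" where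
  "determines n \<S> \<rho> \<longleftrightarrow> \<S> \<subseteq> Pow (qubits n) \<and>
     (\<forall>\<sigma>\<in>compatible n \<rho> \<S>. \<forall>x\<in>Pow (qubits n). \<forall>y\<in>Pow (qubits n). \<sigma> x y = \<rho> x y)"

text \<open>State determination length: min over determining \<S> of max |S|
  (the max over the empty family read as 0; the full family {[n]} always determines).\<close>
definition sdl :: "nat \<Rightarrow> op \<Rightarrow> nat" where
  "sdl n \<rho> = (LEAST m. \<exists>\<S>. determines n \<S> \<rho> \<and> (\<forall>S\<in>\<S>. card S \<le> m))"

definition dicke :: "nat \<Rightarrow> nat \<Rightarrow> nat set \<Rightarrow> complex" where
  "dicke n i x = (if x \<subseteq> qubits n \<and> card x = i
                  then complex_of_real (1 / sqrt (real (n choose i))) else 0)"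

definition dicke_mix :: "nat \<Rightarrow> nat \<Rightarrow> (nat \<Rightarrow> real) \<Rightarrow> op" where
  "dicke_mix n k lam x y = (\<Sum>i=0..k. complex_of_real (lam i) * dicke n i x * cnj (dicke n i y))"

end

theory Submission
  imports Defs
begin


definition fall :: "nat \<Rightarrow> nat \<Rightarrow> real" where
  "fall w j = (\<Prod>i<j. real w - real i)"

lemma fall_Suc: "fall w (Suc j) = fall w j * (real w - real j)"
  by (simp add: fall_def)

lemma orth_prod:
  fixes d :: "nat \<Rightarrow> real" and a :: "'i \<Rightarrow> real" and I :: "'i set"
  assumes orth: "\<forall>j\<le>r. (\<Sum>w\<le>N. d w * fall w j) = 0"
    and fin: "finite I"
  shows "card I + j \<le> r \<Longrightarrow> (\<Sum>w\<le>N. d w * fall w j * (\<Prod>i\<in>I. real w - a i)) = 0"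
  using fin
proof (induction I arbitrary: j rule: finite_induct)
  case empty
  then show ?case using orth by simp
next
  case (insert x F)
  have h1: "(\<Sum>w\<le>N. d w * fall w (Suc j) * (\<Prod>i\<in>F. real w - a i)) = 0"
    using insert by simp
  have h2: "(\<Sum>w\<le>N. d w * fall w j * (\<Prod>i\<in>F. real w - a i)) = 0"
    using insert by simp
  have "(\<Sum>w\<le>N. d w * fall w j * (\<Prod>i\<in>insert x F. real w - a i))
      = (\<Sum>w\<le>N. d w * fall w (Suc j) * (\<Prod>i\<in>F. real w - a i))
        + (real j - a x) * (\<Sum>w\<le>N. d w * fall w j * (\<Prod>i\<in>F. real w - a i))"
    using insert.hyps
    by (simp add: fall_Suc sum_distrib_left sum.distrib[symmetric] algebra_simps)
  then show ?case using h1 h2 by simp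
qed

lemma prod_sign:
  fixes x :: nat
  assumes "finite A" "x \<notin> A"
  shows "(-1) ^ card {a\<in>A. x < a} * (\<Prod>a\<in>A. real x - real a) > 0"
  using assms
proof (induction A rule: finite_induct)
  case empty then show ?case by simp
next
  case (insert b F)
  show ?case
  proof (cases "x < b")
    case True
    have "{a\<in>insert b F. x < a} = insert b {a\<in>F. x < a}" using True by auto
    moreover have "b \<notin> {a\<in>F. x < a}" using insert by auto
    ultimately have c: "card {a\<in>insert b F. x < a} = Suc (card {a\<in>F. x < a})"
      using insert by simp
    have "(-1) ^ card {a\<in>insert b F. x < a} * (\<Prod>a\<in>insert b F. real x - real a)
      = ((-1) ^ card {a\<in>F. x < a} * (\<Prod>a\<in>F. real x - real a)) * (real b - real x)" (is "?L = ?R")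
      using insert c by (simp add: algebra_simps)
    moreover have "?R > 0" by (rule mult_pos_pos) (use insert True in auto)
    ultimately show ?thesis by linarith
  next
    case False
    then have "{a\<in>insert b F. x < a} = {a\<in>F. x < a}" by auto
    moreover have "x \<noteq> b" using insert by auto
    ultimately have "(-1) ^ card {a\<in>insert b F. x < a} * (\<Prod>a\<in>insert b F. real x - real a)
      = ((-1) ^ card {a\<in>F. x < a} * (\<Prod>a\<in>F. real x - real a)) * (real x - real b)" (is "?L = ?R")
      using insert by (simp add: algebra_simps)
    moreover have "?R > 0" by (rule mult_pos_pos) (use insert False \<open>x \<noteq> b\<close> in auto)
    ultimately show ?thesis by linarith
  qed
qed

lemma classical_moment:
  fixes d :: "nat \<Rightarrow> real" and n k istar :: nat
  assumes "k \<le> n" "istar \<le> k"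
    and orth: "\<forall>j\<le>k + min ((k - istar) mod 2) (n - k). (\<Sum>w\<le>n. d w * fall w j) = 0"
    and pos1: "d istar \<ge> 0" and pos2: "\<forall>w. k < w \<and> w \<le> n \<longrightarrow> d w \<ge> 0"
  shows "\<forall>w. k < w \<and> w \<le> n \<longrightarrow> d w = 0"
proof -
  define A where "A = {0..k} - {istar}"
  have finA: "finite A" and cardA: "card A = k" using assms by (auto simp: A_def)
  define m where "m = k + min ((k - istar) mod 2) (n - k)"
  define PA where "PA w = (\<Prod>a\<in>A. real w - real a)" for w
  have PA_zero: "PA w = 0" if "w \<le> k" "w \<noteq> istar" for w
    using that finA unfolding PA_def by (intro prod_zero) (auto simp: A_def)
  have PA_big: "PA w > 0" if "k < w" for w
    unfolding PA_def using that by (intro prod_pos) (auto simp: A_def)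
  have cnt: "card {a\<in>A. istar < a} = k - istar"
  proof -
    have "{a\<in>A. istar < a} = {istar<..k}" by (auto simp: A_def)
    then show ?thesis by simp
  qed
  have PA_i: "(-1) ^ (k - istar) * PA istar > 0"
    using prod_sign[OF finA, of istar] cnt unfolding PA_def by (simp add: A_def)
  define F :: "nat \<Rightarrow> real" where
    "F w = (if even (k - istar) then 1 else if k = n then -1 else real w - (real k + 1/2))" for w
  define P where "P w = PA w * F w" for w
  have P_orth: "(\<Sum>w\<le>n. d w * P w) = 0"
  proof (cases "even (k - istar)")
    case True
    have "(\<Sum>w\<le>n. d w * fall w 0 * (\<Prod>i\<in>A. real w - real i)) = 0"
      using orth_prod[of m d n A 0 real] orth finA cardA unfolding m_def by simp
    then show ?thesis using True by (simp add: P_def F_def PA_def fall_def)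
  next
    case odd: False
    show ?thesis
    proof (cases "k = n")
      case True
      have "(\<Sum>w\<le>n. d w * fall w 0 * (\<Prod>i\<in>A. real w - real i)) = 0"
        using orth_prod[of m d n A 0 real] orth finA cardA unfolding m_def by simp
      then have "(\<Sum>w\<le>n. d w * PA w) = 0" by (simp add: PA_def fall_def)
      then have "- (\<Sum>w\<le>n. d w * PA w) = 0" by simp
      then show ?thesis using odd True by (simp add: P_def F_def sum_negf[symmetric])
    next
      case False
      have "(k - istar) mod 2 = 1" using odd by presburger
      then have mk: "m = Suc k" using False \<open>k \<le> n\<close> unfolding m_def by simp
      define a where "a x = (if x = None then real k + 1/2 else real (the x))" for x
      define B where "B = insert None (Some ` A)"
      have finB: "finite B" "card B = Suc k"
        using finA cardA by (auto simp: B_def card_image)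
      have "(\<Sum>w\<le>n. d w * fall w 0 * (\<Prod>i\<in>B. real w - a i)) = 0"
        using orth_prod[of m d n B 0 a] orth finB mk unfolding m_def by simp
      moreover have "(\<Prod>i\<in>B. real w - a i) = P w" for w
        using finA odd False
        by (simp add: B_def a_def P_def PA_def F_def prod.reindex mult.commute)
      ultimately show ?thesis by (simp add: fall_def)
    qed
  qed
  have P_nonneg: "d w * P w \<ge> 0" if "w \<le> n" for w
  proof (cases "w \<le> k \<and> w \<noteq> istar")
    case True then show ?thesis by (simp add: P_def PA_zero)
  next
    case False
    then consider "w = istar" | "k < w" by linarith
    then show ?thesis
    proof cases
      case 1
      have "P w > 0"
      proof (cases "even (k - istar)")
        case True then show ?thesis using PA_i 1 by (simp add: P_def F_def)
      next
        case odd: False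
        then have s: "(-1::real) ^ (k - istar) = -1" by simp
        show ?thesis
        proof (cases "k = n")
          case True then show ?thesis using PA_i 1 odd s by (simp add: P_def F_def)
        next
          case False
          have "real istar - (real k + 1/2) < 0" using assms by simp
          then show ?thesis using PA_i 1 odd s False
            by (simp add: P_def F_def mult_neg_neg)
        qed
      qed
      then show ?thesis using pos1 1 by simp
    next
      case 2
      have "P w > 0"
      proof -
        have "F w > 0" using 2 that by (auto simp: F_def)
        then show ?thesis using PA_big[OF 2] by (simp add: P_def)
      qed
      then show ?thesis using pos2 2 that by simp
    qed
  qed
  have allz: "d w * P w = 0" if "w \<le> n" for w
    using sum_nonneg_eq_0_iff[of "{..n}" "\<lambda>w. d w * P w"] P_orth P_nonneg that by auto
  show ?thesis
  proof (intro allI impI)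
    fix w assume w: "k < w \<and> w \<le> n"
    have "F w > 0" using w by (auto simp: F_def)
    then have "P w > 0" using PA_big w by (simp add: P_def)
    then show "d w = 0" using allz[of w] w by auto
  qed
qed



definition Bf :: "nat \<Rightarrow> op \<Rightarrow> (nat set \<Rightarrow> complex) \<Rightarrow> (nat set \<Rightarrow> complex) \<Rightarrow> complex" where
  "Bf n \<sigma> u v = (\<Sum>x\<in>Pow (qubits n). \<Sum>y\<in>Pow (qubits n). cnj (u x) * \<sigma> x y * v y)"

lemma sum2_scale: "(\<Sum>x\<in>A. \<Sum>y\<in>B. (t::complex) * f x y) = t * (\<Sum>x\<in>A. \<Sum>y\<in>B. f x y)"
  by (simp add: sum_distrib_left)

lemma Bf_expand:
  "Bf n \<sigma> (\<lambda>x. v x + t * u x) (\<lambda>x. v x + t * u x)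
   = Bf n \<sigma> v v + t * Bf n \<sigma> v u + cnj t * Bf n \<sigma> u v + cnj t * t * Bf n \<sigma> u u"
proof -
  let ?P = "Pow (qubits n)"
  have "Bf n \<sigma> (\<lambda>x. v x + t * u x) (\<lambda>x. v x + t * u x)
     = (\<Sum>x\<in>?P. \<Sum>y\<in>?P. cnj (v x) * \<sigma> x y * v y + t * (cnj (v x) * \<sigma> x y * u y)
          + cnj t * (cnj (u x) * \<sigma> x y * v y) + cnj t * t * (cnj (u x) * \<sigma> x y * u y))"
    unfolding Bf_def by (intro sum.cong refl) (simp add: algebra_simps)
  also have "\<dots> = (\<Sum>x\<in>?P. \<Sum>y\<in>?P. cnj (v x) * \<sigma> x y * v y) + (\<Sum>x\<in>?P. \<Sum>y\<in>?P. t * (cnj (v x) * \<sigma> x y * u y))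
          + (\<Sum>x\<in>?P. \<Sum>y\<in>?P. cnj t * (cnj (u x) * \<sigma> x y * v y)) + (\<Sum>x\<in>?P. \<Sum>y\<in>?P. cnj t * t * (cnj (u x) * \<sigma> x y * u y))"
    by (simp only: sum.distrib)
  also have "\<dots> = Bf n \<sigma> v v + t * Bf n \<sigma> v u + cnj t * Bf n \<sigma> u v + cnj t * t * Bf n \<sigma> u u"
    unfolding Bf_def sum2_scale by simp
  finally show ?thesis .
qed

lemma Bf_herm:
  assumes "\<forall>x\<in>Pow (qubits n). \<forall>y\<in>Pow (qubits n). \<sigma> y x = cnj (\<sigma> x y)"
  shows "Bf n \<sigma> u v = cnj (Bf n \<sigma> v u)"
proof -
  have "cnj (Bf n \<sigma> v u) = (\<Sum>x\<in>Pow (qubits n). \<Sum>y\<in>Pow (qubits n). v x * cnj (\<sigma> x y) * cnj (u y))"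
    unfolding Bf_def by (simp add: cnj_sum)
  also have "\<dots> = (\<Sum>x\<in>Pow (qubits n). \<Sum>y\<in>Pow (qubits n). v x * \<sigma> y x * cnj (u y))"
  proof (intro sum.cong refl)
    fix x y assume "x \<in> Pow (qubits n)" "y \<in> Pow (qubits n)"
    then have "\<sigma> y x = cnj (\<sigma> x y)" using assms by blast
    then show "v x * cnj (\<sigma> x y) * cnj (u y) = v x * \<sigma> y x * cnj (u y)" by simp
  qed
  also have "\<dots> = (\<Sum>y\<in>Pow (qubits n). \<Sum>x\<in>Pow (qubits n). v x * \<sigma> y x * cnj (u y))"
    by (rule sum.swap)
  also have "\<dots> = Bf n \<sigma> u v"
    unfolding Bf_def by (intro sum.cong refl) (simp add: mult_ac)
  finally show ?thesis by simp
qed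

lemma density_psd: "density n \<sigma> \<Longrightarrow> 0 \<le> Bf n \<sigma> v v"
  unfolding density_def Bf_def by blast

lemma density_herm: "density n \<sigma> \<Longrightarrow> x \<in> Pow (qubits n) \<Longrightarrow> y \<in> Pow (qubits n) \<Longrightarrow> \<sigma> y x = cnj (\<sigma> x y)"
  unfolding density_def by blast

lemma kernel:
  assumes dens: "density n \<sigma>" and q0: "Bf n \<sigma> v v = 0"
  shows "Bf n \<sigma> v u = 0"
proof -
  have herm: "\<forall>x\<in>Pow (qubits n). \<forall>y\<in>Pow (qubits n). \<sigma> y x = cnj (\<sigma> x y)"
    using dens unfolding density_def by blast
  define \<beta> where "\<beta> = Bf n \<sigma> v u"
  have buv: "Bf n \<sigma> u v = cnj \<beta>" unfolding \<beta>_def by (rule Bf_herm[OF herm, of u v])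
  have qu: "0 \<le> Bf n \<sigma> u u" using density_psd[OF dens] .
  define q where "q = Re (Bf n \<sigma> u u)"
  have q0': "q \<ge> 0" and quq: "Bf n \<sigma> u u = of_real q"
    using qu unfolding q_def by (auto simp: less_eq_complex_def complex_eq_iff)
  define s where "s = 1 / (q + 1)"
  have spos: "s > 0" using q0' by (simp add: s_def)
  have sq: "s * q < 1" using q0' by (simp add: s_def field_simps)
  define t where "t = - (of_real s * cnj \<beta>)"
  have "0 \<le> Bf n \<sigma> (\<lambda>x. v x + t * u x) (\<lambda>x. v x + t * u x)" using density_psd[OF dens] .
  also have "\<dots> = t * \<beta> + cnj t * cnj \<beta> + cnj t * t * of_real q"
    using Bf_expand q0 buv quq \<beta>_def by simp
  finally have h: "0 \<le> Re (t * \<beta> + cnj t * cnj \<beta> + cnj t * t * of_real q)"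
    by (simp add: less_eq_complex_def)
  have c2: "(cmod \<beta>)^2 = Re \<beta> * Re \<beta> + Im \<beta> * Im \<beta>"
    using cmod_power2[of \<beta>] by (simp add: power2_eq_square)
  have "Re (t * \<beta> + cnj t * cnj \<beta> + cnj t * t * of_real q) = (Re \<beta> * Re \<beta> + Im \<beta> * Im \<beta>) * (s * s * q - 2 * s)"
    unfolding t_def
    by (simp add: algebra_simps)
  then have "Re (t * \<beta> + cnj t * cnj \<beta> + cnj t * t * of_real q) = (cmod \<beta>)^2 * (s * s * q - 2 * s)"
    using c2 by simp
  with h have ge: "(cmod \<beta>)^2 * (s * s * q - 2 * s) \<ge> 0" by simp
  have lt: "s * s * q - 2 * s < 0"
  proof -
    have "s * (s * q - 2) < 0" using spos sq by (intro mult_pos_neg) auto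
    then show ?thesis by (simp add: algebra_simps)
  qed
  have "(cmod \<beta>)^2 \<le> 0"
  proof (rule ccontr)
    assume "\<not> (cmod \<beta>)^2 \<le> 0"
    then have "(cmod \<beta>)^2 > 0" by simp
    then have "(cmod \<beta>)^2 * (s * s * q - 2 * s) < 0" using lt by (rule mult_pos_neg)
    with ge show False by simp
  qed
  then show ?thesis unfolding \<beta>_def by simp
qed

definition delta1 :: "nat set \<Rightarrow> nat set \<Rightarrow> complex" where
  "delta1 x w = (if w = x then 1 else 0)"

lemma sum_delta1: 
  assumes "x \<in> Pow (qubits n)"
  shows "(\<Sum>w\<in>Pow (qubits n). delta1 x w * g w) = g x"
    "(\<Sum>w\<in>Pow (qubits n). g w * delta1 x w) = g x"
    "(\<Sum>w\<in>Pow (qubits n). cnj (delta1 x w) * g w) = g x"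
proof -
  have fin: "finite (Pow (qubits n))" by (simp add: qubits_def)
  have "(\<Sum>w\<in>Pow (qubits n). delta1 x w * g w) = (\<Sum>w\<in>Pow (qubits n). if w = x then g w else 0)"
    by (rule sum.cong) (auto simp: delta1_def)
  then show "(\<Sum>w\<in>Pow (qubits n). delta1 x w * g w) = g x" using assms fin by simp
  have "(\<Sum>w\<in>Pow (qubits n). g w * delta1 x w) = (\<Sum>w\<in>Pow (qubits n). if w = x then g w else 0)"
    by (rule sum.cong) (auto simp: delta1_def)
  then show "(\<Sum>w\<in>Pow (qubits n). g w * delta1 x w) = g x" using assms fin by simp
  have "(\<Sum>w\<in>Pow (qubits n). cnj (delta1 x w) * g w) = (\<Sum>w\<in>Pow (qubits n). if w = x then g w else 0)"
    by (rule sum.cong) (auto simp: delta1_def)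
  then show "(\<Sum>w\<in>Pow (qubits n). cnj (delta1 x w) * g w) = g x" using assms fin by simp
qed

lemma Bf_left: "Bf n \<sigma> u v = (\<Sum>x\<in>Pow (qubits n). cnj (u x) * (\<Sum>y\<in>Pow (qubits n). \<sigma> x y * v y))"
  unfolding Bf_def by (simp add: sum_distrib_left mult.assoc)

lemma Bf_delta_left:
  assumes "x \<in> Pow (qubits n)"
  shows "Bf n \<sigma> (delta1 x) v = (\<Sum>y\<in>Pow (qubits n). \<sigma> x y * v y)"
  unfolding Bf_left by (rule sum_delta1(3)[OF assms])

lemma Bf_delta:
  assumes "x \<in> Pow (qubits n)" "y \<in> Pow (qubits n)"
  shows "Bf n \<sigma> (delta1 x) (delta1 y) = \<sigma> x y"
  unfolding Bf_delta_left[OF assms(1)] by (rule sum_delta1(2)[OF assms(2)])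

lemma Bf_diff_right:
  "Bf n \<sigma> u (\<lambda>w. v1 w - v2 w) = Bf n \<sigma> u v1 - Bf n \<sigma> u v2"
  unfolding Bf_left by (simp add: algebra_simps sum_subtractf)

lemma Bf_diff_left:
  "Bf n \<sigma> (\<lambda>w. u1 w - u2 w) v = Bf n \<sigma> u1 v - Bf n \<sigma> u2 v"
  unfolding Bf_left by (simp add: algebra_simps sum_subtractf)

lemma Bf_diff:
  "Bf n \<sigma> (\<lambda>w. u1 w - u2 w) (\<lambda>w. v1 w - v2 w)
   = Bf n \<sigma> u1 v1 - Bf n \<sigma> u1 v2 - Bf n \<sigma> u2 v1 + Bf n \<sigma> u2 v2"
  unfolding Bf_diff_left Bf_diff_right by simp

lemma diag_nonneg:
  assumes "density n \<sigma>" "x \<in> Pow (qubits n)"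
  shows "0 \<le> \<sigma> x x"
  using density_psd[OF assms(1), of "delta1 x"] Bf_delta[OF assms(2) assms(2)] by simp

lemma diag_zero_col:
  assumes dens: "density n \<sigma>" and x: "x \<in> Pow (qubits n)" and z: "z \<in> Pow (qubits n)"
    and "\<sigma> x x = 0"
  shows "\<sigma> z x = 0" "\<sigma> x z = 0"
proof -
  have "Bf n \<sigma> (delta1 x) (delta1 z) = 0"
    using kernel[OF dens] Bf_delta[OF x x] assms by simp
  then have "\<sigma> x z = 0" using Bf_delta[OF x z] by simp
  then show "\<sigma> x z = 0" "\<sigma> z x = 0" using density_herm[OF dens x z] by simp_all
qed

lemma diff_kernel:
  assumes dens: "density n \<sigma>" and x: "x \<in> Pow (qubits n)" and y: "y \<in> Pow (qubits n)"
    and z: "z \<in> Pow (qubits n)"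
    and h: "\<sigma> x x + \<sigma> y y - \<sigma> x y - \<sigma> y x = 0"
  shows "\<sigma> z x = \<sigma> z y"
proof -
  define v where "v = (\<lambda>w. delta1 x w - delta1 y w)"
  have "Bf n \<sigma> v v = 0"
    unfolding v_def Bf_diff using Bf_delta x y h by (simp add: algebra_simps)
  then have "Bf n \<sigma> v (delta1 z) = 0" using kernel[OF dens] by blast
  then have "Bf n \<sigma> (delta1 z) v = 0"
  proof -
    have herm: "\<forall>x\<in>Pow (qubits n). \<forall>y\<in>Pow (qubits n). \<sigma> y x = cnj (\<sigma> x y)"
      using dens unfolding density_def by blast
    show ?thesis using Bf_herm[OF herm, of "delta1 z" v] \<open>Bf n \<sigma> v (delta1 z) = 0\<close> by simp
  qed
  then show ?thesis
    unfolding v_def Bf_diff_right using Bf_delta z x y by simp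
qed

lemma re_offdiag_le:
  assumes dens: "density n \<sigma>" and x: "x \<in> Pow (qubits n)" and y: "y \<in> Pow (qubits n)"
  shows "2 * Re (\<sigma> x y) \<le> Re (\<sigma> x x) + Re (\<sigma> y y)"
proof -
  define v where "v = (\<lambda>w. delta1 x w - delta1 y w)"
  have "0 \<le> Bf n \<sigma> v v" using density_psd[OF dens] .
  also have "Bf n \<sigma> v v = \<sigma> x x - \<sigma> x y - \<sigma> y x + \<sigma> y y"
    unfolding v_def Bf_diff using Bf_delta x y by simp
  finally have "0 \<le> Re (\<sigma> x x - \<sigma> x y - \<sigma> y x + \<sigma> y y)" by (simp add: less_eq_complex_def)
  moreover have "\<sigma> y x = cnj (\<sigma> x y)" using density_herm[OF dens x y] .
  ultimately show ?thesis by simp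
qed



lemma fin_qubits[simp]: "finite (qubits n)" "card (qubits n) = n"
  by (simp_all add: qubits_def)

lemma dicke_entry:
  assumes x: "x \<subseteq> qubits n" and y: "y \<subseteq> qubits n"
  shows "dicke_mix n K \<mu> x y =
    (if card x = card y \<and> card x \<le> K then complex_of_real (\<mu> (card x) / real (n choose card x)) else 0)"
proof -
  have cx: "card x \<le> n" using card_mono[OF _ x] by simp
  have Cpos: "real (n choose card x) > 0" using cx by simp
  have trm: "complex_of_real (\<mu> i) * dicke n i x * cnj (dicke n i y)
      = (if i = card x then (if card x = card y then complex_of_real (\<mu> (card x) / real (n choose card x)) else 0) else 0)" for i
  proof (cases "i = card x \<and> card y = card x")
    case True
    have "complex_of_real (1 / sqrt (real (n choose card x))) * complex_of_real (1 / sqrt (real (n choose card x)))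
        = complex_of_real (1 / real (n choose card x))"
      using Cpos by (simp add: of_real_mult[symmetric] del: of_real_mult)
    then show ?thesis using True x y by (simp add: dicke_def mult.assoc)
  next
    case False then show ?thesis using x y by (auto simp: dicke_def)
  qed
  show ?thesis
    unfolding dicke_mix_def trm by (auto simp: sum.delta)
qed

lemma dicke_herm:
  assumes "x \<subseteq> qubits n" "y \<subseteq> qubits n"
  shows "dicke_mix n K \<mu> y x = cnj (dicke_mix n K \<mu> x y)"
  using assms by (simp add: dicke_entry)

lemma dicke_psd:
  assumes pos: "\<forall>i\<le>K. \<mu> i \<ge> 0"
  shows "0 \<le> Bf n (dicke_mix n K \<mu>) v v"
proof -
  let ?P = "Pow (qubits n)"
  define \<alpha> where "\<alpha> i = (\<Sum>y\<in>?P. cnj (dicke n i y) * v y)" for i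
  have d_real: "cnj (dicke n i x) = dicke n i x" for i x by (simp add: dicke_def)
  have "Bf n (dicke_mix n K \<mu>) v v = (\<Sum>x\<in>?P. \<Sum>y\<in>?P. \<Sum>i=0..K.
          complex_of_real (\<mu> i) * (cnj (v x) * dicke n i x) * (cnj (dicke n i y) * v y))"
    unfolding Bf_def dicke_mix_def by (simp add: sum_distrib_left sum_distrib_right mult_ac)
  also have "\<dots> = (\<Sum>i=0..K. \<Sum>x\<in>?P. \<Sum>y\<in>?P.
          complex_of_real (\<mu> i) * (cnj (v x) * dicke n i x) * (cnj (dicke n i y) * v y))"
    by (simp add: sum.swap[of _ "{0..K}"])
  also have "\<dots> = (\<Sum>i=0..K. complex_of_real (\<mu> i) * cnj (\<alpha> i) * \<alpha> i)"
    unfolding \<alpha>_def by (simp add: sum_distrib_left sum_distrib_right cnj_sum d_real mult_ac)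
  also have "\<dots> = (\<Sum>i=0..K. complex_of_real (\<mu> i * (cmod (\<alpha> i))^2))"
    by (intro sum.cong refl) (simp add: complex_mult_cnj mult.assoc[symmetric] mult.commute cmod_power2 flip: of_real_power of_real_add)
  also have "\<dots> \<ge> 0"
    using pos by (intro sum_nonneg) (auto simp: less_eq_complex_def)
  finally show ?thesis .
qed



lemma count_subsets:
  assumes S: "S \<subseteq> qubits n" and r: "r \<le> card S"
  shows "card {c \<in> Pow (qubits n - S). card c + r = w} = (if r \<le> w then (n - card S) choose (w - r) else 0)"
proof (cases "r \<le> w")
  case True
  have "{c \<in> Pow (qubits n - S). card c + r = w} = {c. c \<subseteq> qubits n - S \<and> card c = w - r}"
    using True by auto
  moreover have "card (qubits n - S) = n - card S"
    using S by (simp add: card_Diff_subset finite_subset)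
  ultimately show ?thesis using True by (simp add: n_subsets)
next
  case False
  then have "{c \<in> Pow (qubits n - S). card c + r = w} = {}" by auto
  then show ?thesis using False by simp
qed

lemma ptrace_dicke:
  assumes S: "S \<subseteq> qubits n" and a: "a \<subseteq> S" and b: "b \<subseteq> S"
  shows "ptrace n (dicke_mix n K \<mu>) S a b =
    (if card a = card b then (\<Sum>w\<le>n. complex_of_real ((if w \<le> K then \<mu> w else 0) *
        (if card a \<le> w then real ((n - card S) choose (w - card a)) else 0) / real (n choose w))) else 0)"
proof -
  let ?C = "Pow (qubits n - S)"
  have finS: "finite S" by (rule finite_subset[OF S]) simp
  have cu: "card (x \<union> c) = card x + card c" if "x \<subseteq> S" "c \<in> ?C" for x c
  proof -
    have "finite x" using that finS finite_subset by auto
    moreover have "finite c" using that by (auto intro: finite_subset)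
    moreover have "x \<inter> c = {}" using that by auto
    ultimately show ?thesis by (simp add: card_Un_disjoint)
  qed
  have sub: "x \<union> c \<subseteq> qubits n" if "x \<subseteq> S" "c \<in> ?C" for x c using that S by auto
  define g where "g w = (if w \<le> K then complex_of_real (\<mu> w / real (n choose w)) else 0)" for w
  have ent: "dicke_mix n K \<mu> (a \<union> c) (b \<union> c) =
      (if card a = card b then g (card c + card a) else 0)" if "c \<in> ?C" for c
    using dicke_entry[OF sub[OF a that] sub[OF b that]] cu[OF a that] cu[OF b that]
    by (simp add: g_def add.commute)
  show ?thesis
  proof (cases "card a = card b")
    case False
    then show ?thesis unfolding ptrace_def using ent by simp
  next
    case True
    define r where "r = card a"
    have rS: "r \<le> card S" using a finS by (simp add: r_def card_mono)
    have "ptrace n (dicke_mix n K \<mu>) S a b = (\<Sum>c\<in>?C. g (card c + r))"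
      unfolding ptrace_def using ent True r_def by simp
    also have "\<dots> = (\<Sum>w\<le>n. \<Sum>c\<in>{c\<in>?C. card c + r = w}. g (card c + r))"
    proof (rule sum.group[symmetric])
      show "finite ?C" by simp
      show "finite {..n}" by simp
      show "(\<lambda>c. card c + r) ` ?C \<subseteq> {..n}"
      proof
        fix w assume "w \<in> (\<lambda>c. card c + r) ` ?C"
        then obtain c where c: "c \<in> ?C" "w = card c + r" by auto
        have "c \<union> S \<subseteq> qubits n" using c S by auto
        then have "card (c \<union> S) \<le> n" using card_mono[of "qubits n" "c \<union> S"] by simp
        then show "w \<in> {..n}" using cu[of S c] c rS by (simp add: Un_commute)
      qed
    qed
    also have "\<dots> = (\<Sum>w\<le>n. of_nat (card {c\<in>?C. card c + r = w}) * g w)"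
      by (intro sum.cong refl) simp
    also have "\<dots> = (\<Sum>w\<le>n. complex_of_real ((if w \<le> K then \<mu> w else 0) *
        (if card a \<le> w then real ((n - card S) choose (w - card a)) else 0) / real (n choose w)))"
      using count_subsets[OF S rS] by (intro sum.cong refl) (simp add: g_def r_def)
    finally show ?thesis using True by simp
  qed
qed



lemma trinom_sym:
  fixes N A B :: nat
  shows "(N choose A) * ((N - A) choose B) = (N choose B) * ((N - B) choose A)"
proof (cases "A + B \<le> N")
  case True
  have 1: "(N choose (A+B)) * ((A+B) choose A) = (N choose A) * ((N - A) choose B)"
    using choose_mult[of A "A+B" N] True by simp
  have 2: "(N choose (A+B)) * ((A+B) choose B) = (N choose B) * ((N - B) choose A)"
    using choose_mult[of B "A+B" N] True by simp
  have "(A+B) choose A = (A+B) choose B" using binomial_symmetric[of A "A+B"] by simp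
  then show ?thesis using 1 2 by simp
next
  case False
  have "(N choose A) * ((N - A) choose B) = 0"
  proof (cases "A \<le> N")
    case True then have "N - A < B" using False by simp
    then show ?thesis by (simp add: binomial_eq_0)
  next
    case F: False then show ?thesis by (simp add: binomial_eq_0)
  qed
  moreover have "(N choose B) * ((N - B) choose A) = 0"
  proof (cases "B \<le> N")
    case True then have "N - B < A" using False by simp
    then show ?thesis by (simp add: binomial_eq_0)
  next
    case F: False then show ?thesis by (simp add: binomial_eq_0)
  qed
  ultimately show ?thesis by metis
qed

lemma trinom:
  assumes "r \<le> w" "w \<le> n" "r \<le> s" "s \<le> n"
  shows "((n - s) choose (w - r)) * (n choose s) * (s choose r) = (n choose w) * (w choose r) * ((n - w) choose (s - r))"
proof -
  have a: "(n choose w) * (w choose r) = (n choose r) * ((n - r) choose (w - r))"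
    using choose_mult assms by blast
  have b: "(n choose s) * (s choose r) = (n choose r) * ((n - r) choose (s - r))"
    using choose_mult assms by blast
  have c: "((n - r) choose (w - r)) * ((n - r - (w - r)) choose (s - r)) = ((n - r) choose (s - r)) * ((n - r - (s - r)) choose (w - r))"
    by (rule trinom_sym)
  have "n - r - (w - r) = n - w" "n - r - (s - r) = n - s" using assms by auto
  with a b c show ?thesis by (simp add: mult_ac)
qed

lemma bin_fall: "real (w choose r) = fall w r / fact r"
  unfolding binomial_gbinomial fall_def gbinomial_prod_rev
  by (simp add: atLeast0LessThan)

lemma bin_fall2:
  assumes "w \<le> n"
  shows "real ((n - w) choose t) = (-1)^t * (\<Prod>i<t. real w - (real n - real i)) / fact t"
proof -
  have "real ((n - w) choose t) = fall (n - w) t / fact t" by (rule bin_fall)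
  also have "fall (n - w) t = (\<Prod>i<t. - (real w - (real n - real i)))"
    unfolding fall_def using assms by (intro prod.cong refl) (simp add: of_nat_diff)
  also have "\<dots> = (-1)^t * (\<Prod>i<t. real w - (real n - real i))"
  proof -
    have "(\<Prod>i<t. - (real w - (real n - real i))) = (\<Prod>i<t. (-1) * (real w - (real n - real i)))"
      by simp
    also have "\<dots> = (\<Prod>i<t. (-1::real)) * (\<Prod>i<t. real w - (real n - real i))"
      by (rule prod.distrib)
    finally show ?thesis by simp
  qed
  finally show ?thesis by simp
qed

lemma alt_orth:
  assumes "j < m"
  shows "(\<Sum>w\<le>m. (-1)^w * real (m choose w) * real (w choose j)) = 0"
proof -
  have "(\<Sum>w\<le>m. (-1)^w * real (m choose w) * real (w choose j))
      = (\<Sum>w\<in>{j..m}. (-1)^w * real (m choose j) * real ((m - j) choose (w - j)))"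
  proof -
    have "(\<Sum>w\<le>m. (-1)^w * real (m choose w) * real (w choose j))
        = (\<Sum>w\<in>{j..m}. (-1)^w * real (m choose w) * real (w choose j))"
      by (rule sum.mono_neutral_right) auto
    also have "\<dots> = (\<Sum>w\<in>{j..m}. (-1)^w * real (m choose j) * real ((m - j) choose (w - j)))"
    proof (intro sum.cong refl)
      fix w assume "w \<in> {j..m}"
      then have "(m choose w) * (w choose j) = (m choose j) * ((m - j) choose (w - j))"
        using choose_mult by auto
      then have "real (m choose w) * real (w choose j) = real (m choose j) * real ((m - j) choose (w - j))"
        by (metis of_nat_mult)
      then show "(-1)^w * real (m choose w) * real (w choose j) = (-1)^w * real (m choose j) * real ((m - j) choose (w - j))"
        by (simp add: mult.assoc)
    qed
    finally show ?thesis .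
  qed
  also have "\<dots> = (\<Sum>u\<in>{0..m-j}. (-1)^(u+j) * real (m choose j) * real ((m - j) choose u))"
    using sum.shift_bounds_cl_nat_ivl[of "\<lambda>w. (-1)^w * real (m choose j) * real ((m - j) choose (w - j))" 0 j "m - j"] assms
    by simp
  also have "\<dots> = (-1)^j * real (m choose j) * (\<Sum>u\<le>m-j. (-1)^u * real ((m - j) choose u))"
    by (simp add: sum_distrib_left power_add mult_ac atLeast0AtMost)
  also have "\<dots> = 0" using choose_alternating_sum[of "m - j"] assms by simp
  finally show ?thesis .
qed

lemma lb_sum:
  assumes "m \<le> n" "s < m" "r \<le> s"
  shows "(\<Sum>w\<le>n. (if w \<le> m then (-1)^w * real (m choose w) else 0) *
      (if r \<le> w then real ((n - s) choose (w - r)) else 0) / real (n choose w)) = 0"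
proof -
  define d where "d w = (if w \<le> m then (-1)^w * real (m choose w) else 0)" for w
  define K where "K = real (n choose s) * real (s choose r)"
  have Kpos: "K > 0" using assms by (simp add: K_def)
  have orth: "\<forall>j\<le>m - 1. (\<Sum>w\<le>n. d w * fall w j) = 0"
  proof (intro allI impI)
    fix j assume j: "j \<le> m - 1"
    have "(\<Sum>w\<le>n. d w * fall w j) = (\<Sum>w\<le>m. d w * fall w j)"
      using assms by (intro sum.mono_neutral_right) (auto simp: d_def)
    also have "\<dots> = fact j * (\<Sum>w\<le>m. (-1)^w * real (m choose w) * real (w choose j))"
      by (simp add: sum_distrib_left d_def bin_fall mult_ac)
    also have "\<dots> = 0" using alt_orth[of j m] j assms by simp
    finally show "(\<Sum>w\<le>n. d w * fall w j) = 0" .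
  qed
  have key: "(\<Sum>w\<le>n. d w * fall w r * (\<Prod>i\<in>{..<s-r}. real w - (real n - real i))) = 0"
    using orth_prod[OF orth, of "{..<s-r}" r "\<lambda>i. real n - real i"] assms by simp
  have trm: "d w * (if r \<le> w then real ((n - s) choose (w - r)) else 0) / real (n choose w)
      = ((-1)^(s-r) / (K * fact r * fact (s - r))) * (d w * fall w r * (\<Prod>i\<in>{..<s-r}. real w - (real n - real i)))"
    if w: "w \<le> n" for w
  proof (cases "r \<le> w")
    case True
    have eqn: "real ((n - s) choose (w - r)) * K = real (n choose w) * (real (w choose r) * real ((n - w) choose (s - r)))"
      using arg_cong[OF trinom[OF True w assms(3)], of real] assms unfolding K_def
      by (simp add: mult.assoc)
    have Cn: "real (n choose w) > 0" using w by simp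
    have e1: "real ((n - s) choose (w - r)) / real (n choose w) = real (w choose r) * real ((n - w) choose (s - r)) / K"
      using eqn Cn Kpos by (simp add: divide_simps)
    have "d w * (if r \<le> w then real ((n - s) choose (w - r)) else 0) / real (n choose w)
        = d w * (real ((n - s) choose (w - r)) / real (n choose w))" using True by simp
    also have "\<dots> = d w * (real (w choose r) * real ((n - w) choose (s - r)) / K)" using e1 by simp
    also have "\<dots> = d w * ((fall w r / fact r) * ((-1)^(s-r) * (\<Prod>i<s-r. real w - (real n - real i)) / fact (s-r)) / K)"
      by (simp only: bin_fall2[OF w] bin_fall[of w r])
    also have "\<dots> = ((-1)^(s-r) / (K * fact r * fact (s - r))) * (d w * fall w r * (\<Prod>i\<in>{..<s-r}. real w - (real n - real i)))"
      by (simp add: divide_inverse mult_ac inverse_mult_distrib)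
    finally show ?thesis .
  next
    case False
    then have "fall w r = 0" unfolding fall_def by (intro prod_zero) (auto intro!: bexI[of _ w])
    then show ?thesis using False by simp
  qed
  have "(\<Sum>w\<le>n. d w * (if r \<le> w then real ((n - s) choose (w - r)) else 0) / real (n choose w))
      = ((-1)^(s-r) / (K * fact r * fact (s - r))) * (\<Sum>w\<le>n. d w * fall w r * (\<Prod>i\<in>{..<s-r}. real w - (real n - real i)))"
    unfolding sum_distrib_left by (intro sum.cong refl) (simp add: trm)
  also have "\<dots> = 0" using key by simp
  finally show ?thesis unfolding d_def .
qed



lemma trace_ptrace: "(\<Sum>x\<in>Pow (qubits n). \<sigma> x x) = ptrace n \<sigma> {} {} {}"
  by (simp add: ptrace_def)

lemma rho_trace:
  assumes "k \<le> n" "(\<Sum>i=0..k. lam i) = 1"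
  shows "ptrace n (dicke_mix n k lam) {} {} {} = 1"
proof -
  have "ptrace n (dicke_mix n k lam) {} {} {} =
     (\<Sum>w\<le>n. complex_of_real ((if w \<le> k then lam w else 0) * real (n choose w) / real (n choose w)))"
    using ptrace_dicke[of "{}" n "{}" "{}" k lam] by simp
  also have "\<dots> = complex_of_real (\<Sum>w\<le>n. (if w \<le> k then lam w else 0))"
    by (simp add: of_real_sum[symmetric] del: of_real_sum)
  also have "(\<Sum>w\<le>n. (if w \<le> k then lam w else 0)) = (\<Sum>w\<le>k. lam w)"
  proof -
    have "(\<Sum>w\<le>n. (if w \<le> k then lam w else 0)) = (\<Sum>w\<in>{w\<in>{..n}. w \<le> k}. lam w)"
      by (rule sum.inter_filter[symmetric]) simp
    also have "{w\<in>{..n}. w \<le> k} = {..k}" using assms(1) by auto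
    finally show ?thesis .
  qed
  also have "\<dots> = 1" using assms(2) by (simp add: atLeast0AtMost)
  finally show ?thesis by simp
qed

lemma dicke_density:
  assumes "\<forall>i\<le>K. \<mu> i \<ge> 0" "(\<Sum>x\<in>Pow (qubits n). dicke_mix n K \<mu> x x) = 1"
  shows "density n (dicke_mix n K \<mu>)"
  unfolding density_def
proof (intro conjI ballI allI)
  fix x y assume x: "x \<in> Pow (qubits n)" and y: "y \<in> Pow (qubits n)"
  show "dicke_mix n K \<mu> y x = cnj (dicke_mix n K \<mu> x y)"
    by (rule dicke_herm) (use x y in auto)
next
  fix v :: "nat set \<Rightarrow> complex"
  show "0 \<le> (\<Sum>x\<in>Pow (qubits n). \<Sum>y\<in>Pow (qubits n). cnj (v x) * dicke_mix n K \<mu> x y * v y)"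
    using dicke_psd[OF assms(1), of n v] unfolding Bf_def .
next
  show "(\<Sum>x\<in>Pow (qubits n). dicke_mix n K \<mu> x x) = 1" by (rule assms(2))
qed

lemma rho_density:
  assumes "k \<le> n" "(\<Sum>i=0..k. lam i) = 1" "\<forall>i\<le>k. lam i \<ge> 0"
  shows "density n (dicke_mix n k lam)"
  using dicke_density[OF assms(3)] rho_trace[OF assms(1,2)] unfolding trace_ptrace by blast

lemma lower:
  fixes n k istar :: nat and lam :: "nat \<Rightarrow> real"
  assumes "n \<ge> 2" and "1 \<le> k" and "k \<le> n"
    and lpos: "\<forall>i\<le>k. lam i \<ge> 0"
    and lsum: "(\<Sum>i=0..k. lam i) = 1"
    and "istar \<le> k" and "lam istar = 0"
    and lnz: "\<forall>i\<le>k. i \<noteq> istar \<longrightarrow> lam i \<noteq> 0"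
    and mdef: "m = k + min ((k - istar) mod 2) (n - k)"
    and fam: "\<forall>S\<in>\<S>. card S < m"
  shows "\<not> determines n \<S> (dicke_mix n k lam)"
proof
  assume det: "determines n \<S> (dicke_mix n k lam)"
  have mn: "m \<le> n" and km: "k \<le> m" using assms by auto
  have m_cases: "m = k \<or> (m = Suc k \<and> odd (k - istar))"
  proof (cases "even (k - istar)")
    case True then have "(k - istar) mod 2 = 0" by presburger
    then show ?thesis using mdef by simp
  next
    case False then have "(k - istar) mod 2 = 1" by presburger
    then show ?thesis using mdef False by (auto simp: min_def)
  qed
  define A where "A = {0..k} - {istar}"
  have "(if istar = 0 then 1 else 0) \<in> A" using assms by (auto simp: A_def)
  then have Ane: "A \<noteq> {}" "finite A" by (auto simp: A_def)
  define \<mu>0 where "\<mu>0 = Min (lam ` A)"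
  have mu0pos: "\<mu>0 > 0"
  proof -
    have "\<forall>a\<in>lam ` A. 0 < a"
    proof
      fix a assume "a \<in> lam ` A"
      then obtain i where i: "i \<in> A" "a = lam i" by auto
      then have "i \<le> k" "i \<noteq> istar" by (auto simp: A_def)
      then show "0 < a" using lpos lnz i(2) by (simp add: order_less_le)
    qed
    then show ?thesis unfolding \<mu>0_def using Ane by (subst Min_gr_iff) auto
  qed
  have mu0le: "\<mu>0 \<le> lam i" if "i \<in> A" for i
    unfolding \<mu>0_def using Ane that by (intro Min_le) auto
  define \<epsilon> :: real where "\<epsilon> = \<mu>0 / 2^m"
  have epos: "\<epsilon> > 0" using mu0pos by (simp add: \<epsilon>_def)
  define \<delta> where "\<delta> w = \<epsilon> * (-1)^(w + istar) * real (m choose w)" for w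
  define \<mu> where "\<mu> w = (if w \<le> k then lam w else 0) + \<delta> w" for w
  define \<sigma> where "\<sigma> = dicke_mix n m \<mu>"
  define \<rho> where "\<rho> = dicke_mix n k lam"
  have mupos: "\<mu> i \<ge> 0" if "i \<le> m" for i
  proof -
    consider "i \<le> k" "i \<noteq> istar" | "i = istar" | "k < i" by linarith
    then show ?thesis
    proof cases
      case 1
      have "\<bar>\<delta> i\<bar> = \<epsilon> * real (m choose i)" using epos by (simp add: \<delta>_def abs_mult)
      also have "\<dots> \<le> \<epsilon> * 2^m"
        using epos binomial_le_pow2[of m i] by (intro mult_left_mono) (auto simp flip: of_nat_power)
      also have "\<dots> = \<mu>0" using \<epsilon>_def by simp
      also have "\<dots> \<le> lam i" using mu0le 1 by (auto simp: A_def)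
      finally show ?thesis using 1 by (simp add: \<mu>_def)
    next
      case 2
      then show ?thesis using epos assms by (simp add: \<mu>_def \<delta>_def)
    next
      case 3
      then have "i = Suc k" "odd (k - istar)" using m_cases that by auto
      then have "even (i + istar)" using \<open>istar \<le> k\<close> by presburger
      then show ?thesis using 3 epos by (simp add: \<mu>_def \<delta>_def)
    qed
  qed
  have ptr: "ptrace n \<sigma> S a b = ptrace n \<rho> S a b"
    if S: "S \<subseteq> qubits n" "card S < m" and a: "a \<subseteq> S" and b: "b \<subseteq> S" for S a b
  proof (cases "card a = card b")
    case False
    then show ?thesis unfolding \<sigma>_def \<rho>_def using ptrace_dicke[OF S(1) a b] by simp
  next
    case True
    define X where "X w = (if card a \<le> w then real ((n - card S) choose (w - card a)) else 0)" for w
    have ra: "card a \<le> card S" using a S by (meson card_mono finite_subset fin_qubits(1))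
    have "ptrace n \<sigma> S a b - ptrace n \<rho> S a b =
        (\<Sum>w\<le>n. complex_of_real ((if w \<le> m then \<mu> w else 0) * X w / real (n choose w)))
      - (\<Sum>w\<le>n. complex_of_real ((if w \<le> k then lam w else 0) * X w / real (n choose w)))"
      unfolding \<sigma>_def \<rho>_def using ptrace_dicke[OF S(1) a b] True by (simp add: X_def)
    also have "\<dots> = complex_of_real (\<Sum>w\<le>n. (if w \<le> m then \<mu> w else 0) * X w / real (n choose w)
        - (if w \<le> k then lam w else 0) * X w / real (n choose w))"
      by (simp only: of_real_sum of_real_diff sum_subtractf)
    also have "(\<Sum>w\<le>n. (if w \<le> m then \<mu> w else 0) * X w / real (n choose w)
        - (if w \<le> k then lam w else 0) * X w / real (n choose w))
       = (\<epsilon> * (-1)^istar) * (\<Sum>w\<le>n. (if w \<le> m then (-1)^w * real (m choose w) else 0) * X w / real (n choose w))"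
      unfolding sum_distrib_left
      using km by (intro sum.cong refl) (auto simp: \<mu>_def \<delta>_def power_add field_simps)
    also have "(\<Sum>w\<le>n. (if w \<le> m then (-1)^w * real (m choose w) else 0) * X w / real (n choose w)) = 0"
      unfolding X_def by (rule lb_sum[OF mn S(2) ra])
    finally show ?thesis by simp
  qed
  have dens: "density n \<sigma>"
  proof -
    have "ptrace n \<sigma> {} {} {} = ptrace n \<rho> {} {} {}"
      by (rule ptr) (use km assms in auto)
    then have "(\<Sum>x\<in>Pow (qubits n). \<sigma> x x) = 1"
      unfolding trace_ptrace \<rho>_def using rho_trace[OF assms(3) lsum] by simp
    then show ?thesis
      unfolding \<sigma>_def using dicke_density[of m \<mu> n] mupos by blast
  qed
  have comp: "\<sigma> \<in> compatible n \<rho> \<S>"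
  proof -
    have sub: "\<S> \<subseteq> Pow (qubits n)" using det unfolding determines_def by blast
    have "\<forall>S\<in>\<S>. \<forall>a\<in>Pow S. \<forall>b\<in>Pow S. ptrace n \<sigma> S a b = ptrace n \<rho> S a b"
    proof (intro ballI)
      fix S a b assume S: "S \<in> \<S>" and a: "a \<in> Pow S" and b: "b \<in> Pow S"
      show "ptrace n \<sigma> S a b = ptrace n \<rho> S a b"
        by (rule ptr) (use S a b sub fam in auto)
    qed
    then show ?thesis unfolding compatible_def using dens by blast
  qed
  define x where "x = {1..istar}"
  have x: "x \<in> Pow (qubits n)" "card x = istar" using assms by (auto simp: x_def qubits_def)
  have "\<forall>\<tau>\<in>compatible n \<rho> \<S>. \<forall>x\<in>Pow (qubits n). \<forall>y\<in>Pow (qubits n). \<tau> x y = \<rho> x y"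
    using det unfolding determines_def \<rho>_def by blast
  then have "\<sigma> x x = \<rho> x x" using comp x(1) by blast
  moreover have "\<sigma> x x = complex_of_real (\<mu> istar / real (n choose istar))"
    unfolding \<sigma>_def using dicke_entry[of x n x m \<mu>] x km assms by simp
  moreover have "\<rho> x x = 0"
    unfolding \<rho>_def using dicke_entry[of x n x k lam] x assms by simp
  moreover have "\<mu> istar / real (n choose istar) \<noteq> 0"
    using epos assms km by (simp add: \<mu>_def \<delta>_def)
  ultimately show False by simp
qed



lemma ptrace_super:
  assumes T: "T \<subseteq> qubits n"
  shows "ptrace n \<tau> T T T = (\<Sum>x\<in>{x\<in>Pow (qubits n). T \<subseteq> x}. \<tau> x x)"
proof -
  have inj: "inj_on (\<lambda>c. T \<union> c) (Pow (qubits n - T))"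
  proof (rule inj_onI)
    fix c d assume "c \<in> Pow (qubits n - T)" "d \<in> Pow (qubits n - T)" "T \<union> c = T \<union> d"
    then show "c = d" by blast
  qed
  have img: "(\<lambda>c. T \<union> c) ` Pow (qubits n - T) = {x\<in>Pow (qubits n). T \<subseteq> x}"
  proof
    show "(\<lambda>c. T \<union> c) ` Pow (qubits n - T) \<subseteq> {x\<in>Pow (qubits n). T \<subseteq> x}" using T by auto
    show "{x\<in>Pow (qubits n). T \<subseteq> x} \<subseteq> (\<lambda>c. T \<union> c) ` Pow (qubits n - T)"
    proof
      fix x assume "x \<in> {x\<in>Pow (qubits n). T \<subseteq> x}"
      then have "x = T \<union> (x - T)" "x - T \<in> Pow (qubits n - T)" by auto
      then show "x \<in> (\<lambda>c. T \<union> c) ` Pow (qubits n - T)" by blast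
    qed
  qed
  show ?thesis
    unfolding ptrace_def img[symmetric] sum.reindex[OF inj] by simp
qed

lemma moment:
  "(\<Sum>T\<in>{T\<in>Pow (qubits n). card T = j}. ptrace n \<tau> T T T)
   = (\<Sum>w\<le>n. of_nat (w choose j) * (\<Sum>x\<in>{x\<in>Pow (qubits n). card x = w}. \<tau> x x))"
proof -
  let ?P = "Pow (qubits n)"
  have "(\<Sum>T\<in>{T\<in>?P. card T = j}. ptrace n \<tau> T T T)
      = (\<Sum>T\<in>{T\<in>?P. card T = j}. \<Sum>x\<in>{x\<in>?P. T \<subseteq> x}. \<tau> x x)"
  proof (intro sum.cong refl)
    fix T assume "T \<in> {T\<in>?P. card T = j}"
    then show "ptrace n \<tau> T T T = (\<Sum>x\<in>{x\<in>?P. T \<subseteq> x}. \<tau> x x)"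
      using ptrace_super[of T n \<tau>] by auto
  qed
  also have "\<dots> = (\<Sum>x\<in>?P. \<Sum>T\<in>{T\<in>{T\<in>?P. card T = j}. T \<subseteq> x}. \<tau> x x)"
    by (rule sum.swap_restrict) auto
  also have "\<dots> = (\<Sum>x\<in>?P. of_nat (card x choose j) * \<tau> x x)"
  proof (intro sum.cong refl)
    fix x assume x: "x \<in> ?P"
    have "{T\<in>{T\<in>?P. card T = j}. T \<subseteq> x} = {T. T \<subseteq> x \<and> card T = j}" using x by auto
    moreover have "finite x" using x by (auto intro: finite_subset)
    ultimately have "card {T\<in>{T\<in>?P. card T = j}. T \<subseteq> x} = card x choose j"
      by (simp add: n_subsets)
    then show "(\<Sum>T\<in>{T\<in>{T\<in>?P. card T = j}. T \<subseteq> x}. \<tau> x x) = of_nat (card x choose j) * \<tau> x x"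
      by simp
  qed
  also have "\<dots> = (\<Sum>w\<le>n. \<Sum>x\<in>{x\<in>?P. card x = w}. of_nat (card x choose j) * \<tau> x x)"
  proof (rule sum.group[symmetric])
    show "finite ?P" by simp
    show "finite {..n}" by simp
    show "card ` ?P \<subseteq> {..n}"
    proof
      fix w assume "w \<in> card ` ?P"
      then obtain x where "x \<in> ?P" "w = card x" by auto
      then show "w \<in> {..n}" using card_mono[of "qubits n" x] by simp
    qed
  qed
  also have "\<dots> = (\<Sum>w\<le>n. of_nat (w choose j) * (\<Sum>x\<in>{x\<in>?P. card x = w}. \<tau> x x))"
    by (intro sum.cong refl) (simp add: sum_distrib_left)
  finally show ?thesis .
qed



lemma upper:
  fixes n k istar :: nat and lam :: "nat \<Rightarrow> real"
  assumes n2: "n \<ge> 2" and k1: "1 \<le> k" and kn: "k \<le> n"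
    and lpos: "\<forall>i\<le>k. lam i \<ge> 0"
    and lsum: "(\<Sum>i=0..k. lam i) = 1"
    and ik: "istar \<le> k" and li: "lam istar = 0"
    and lnz: "\<forall>i\<le>k. i \<noteq> istar \<longrightarrow> lam i \<noteq> 0"
    and mdef: "m = k + min ((k - istar) mod 2) (n - k)"
  shows "determines n {S\<in>Pow (qubits n). card S \<le> m} (dicke_mix n k lam)"
  unfolding determines_def
proof (intro conjI ballI)
  show "{S\<in>Pow (qubits n). card S \<le> m} \<subseteq> Pow (qubits n)" by auto
  let ?P = "Pow (qubits n)"
  define \<rho> where "\<rho> = dicke_mix n k lam"
  fix \<sigma> assume "\<sigma> \<in> compatible n (dicke_mix n k lam) {S\<in>Pow (qubits n). card S \<le> m}"
  then have dens: "density n \<sigma>"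
    and ptr: "\<And>S a b. S \<subseteq> qubits n \<Longrightarrow> card S \<le> m \<Longrightarrow> a \<subseteq> S \<Longrightarrow> b \<subseteq> S \<Longrightarrow> ptrace n \<sigma> S a b = ptrace n \<rho> S a b"
    unfolding compatible_def \<rho>_def by auto
  have km: "k \<le> m" using mdef by simp
  have rE: "\<rho> x y = (if card x = card y \<and> card x \<le> k then complex_of_real (lam (card x) / real (n choose card x)) else 0)"
    if "x \<in> ?P" "y \<in> ?P" for x y
    unfolding \<rho>_def using dicke_entry[of x n y k lam] that by auto
  have cardP: "card x \<le> n" if "x \<in> ?P" for x using that card_mono[of "qubits n" x] by simp
  define p where "p \<tau> w = (\<Sum>x\<in>{x\<in>?P. card x = w}. \<tau> x x)" for \<tau> :: op and w
  define d where "d w = Re (p \<sigma> w) - Re (p \<rho> w)" for w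
  have mom: "(\<Sum>w\<le>n. d w * fall w j) = 0" if j: "j \<le> m" for j
  proof -
    have "(\<Sum>T\<in>{T\<in>?P. card T = j}. ptrace n \<sigma> T T T) = (\<Sum>T\<in>{T\<in>?P. card T = j}. ptrace n \<rho> T T T)"
      by (intro sum.cong refl) (use j in \<open>auto intro!: ptr\<close>)
    then have "(\<Sum>w\<le>n. of_nat (w choose j) * p \<sigma> w) = (\<Sum>w\<le>n. of_nat (w choose j) * p \<rho> w)"
      unfolding moment p_def .
    then have "Re (\<Sum>w\<le>n. of_nat (w choose j) * p \<sigma> w) = Re (\<Sum>w\<le>n. of_nat (w choose j) * p \<rho> w)"
      by simp
    then have "(\<Sum>w\<le>n. real (w choose j) * Re (p \<sigma> w)) = (\<Sum>w\<le>n. real (w choose j) * Re (p \<rho> w))"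
      by (simp add: Re_sum)
    then have "(\<Sum>w\<le>n. d w * real (w choose j)) = 0"
      by (simp add: d_def algebra_simps sum_subtractf)
    then have "fact j * (\<Sum>w\<le>n. d w * real (w choose j)) = 0" by simp
    moreover have "fact j * (\<Sum>w\<le>n. d w * real (w choose j)) = (\<Sum>w\<le>n. d w * fall w j)"
      by (simp add: sum_distrib_left bin_fall)
    ultimately show ?thesis by simp
  qed
  have diag: "0 \<le> \<sigma> x x" if "x \<in> ?P" for x using diag_nonneg[OF dens that] .
  have pnn: "Re (p \<sigma> w) \<ge> 0" for w
    unfolding p_def Re_sum using diag by (intro sum_nonneg) (auto simp: less_eq_complex_def)
  have prho0: "p \<rho> w = 0" if "w = istar \<or> k < w" for w
    unfolding p_def using that li by (intro sum.neutral) (auto simp: rE)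
  have dz: "\<forall>w. k < w \<and> w \<le> n \<longrightarrow> d w = 0"
  proof (rule classical_moment[OF kn ik])
    show "\<forall>j\<le>k + min ((k - istar) mod 2) (n - k). (\<Sum>w\<le>n. d w * fall w j) = 0"
      using mom mdef by simp
    show "0 \<le> d istar" using pnn prho0 by (simp add: d_def)
    show "\<forall>w. k < w \<and> w \<le> n \<longrightarrow> 0 \<le> d w" using pnn prho0 by (simp add: d_def)
  qed
  have big0: "\<sigma> x x = 0" if x: "x \<in> ?P" "k < card x" for x
  proof -
    have "Re (p \<sigma> (card x)) = 0" using dz x cardP[OF x(1)] prho0 by (simp add: d_def)
    then have "(\<Sum>y\<in>{y\<in>?P. card y = card x}. Re (\<sigma> y y)) = 0" by (simp add: p_def Re_sum)
    then have "Re (\<sigma> x x) = 0"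
      using diag x by (subst (asm) sum_nonneg_eq_0_iff) (auto simp: less_eq_complex_def)
    then show ?thesis using diag[OF x(1)] by (simp add: less_eq_complex_def complex_eq_iff)
  qed
  have bigcol: "\<sigma> z x = 0" "\<sigma> x z = 0" if "x \<in> ?P" "z \<in> ?P" "k < card x" for x z
    using diag_zero_col[OF dens that(1) that(2) big0[OF that(1,3)]] by auto
  have nested_aux: "\<sigma> a b = \<rho> a b" if "b \<in> ?P" "a \<subseteq> b" "n - card b = N" for N a b
    using that
  proof (induction N arbitrary: a b rule: less_induct)
    case (less N)
    have aP: "a \<in> ?P" using less by auto
    show ?case
    proof (cases "k < card b")
      case True
      then show ?thesis using bigcol[OF less(2) aP True] rE[OF aP less(2)] by auto
    next
      case False
      let ?C = "Pow (qubits n - b)"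
      have fin: "finite ?C" by simp
      have e: "ptrace n \<sigma> b a b = ptrace n \<rho> b a b"
        by (rule ptr) (use less False km in auto)
      have rest: "(\<Sum>c\<in>?C - {{}}. \<sigma> (a \<union> c) (b \<union> c)) = (\<Sum>c\<in>?C - {{}}. \<rho> (a \<union> c) (b \<union> c))"
      proof (intro sum.cong refl)
        fix c assume c: "c \<in> ?C - {{}}"
        have bc: "b \<union> c \<in> ?P" using c less by auto
        have "finite c" using c by (auto intro: finite_subset)
        moreover have "finite b" using less by (auto intro: finite_subset)
        moreover have "b \<inter> c = {}" "c \<noteq> {}" using c by auto
        ultimately have "card (b \<union> c) > card b"
          by (simp add: card_Un_disjoint card_gt_0_iff)
        moreover have "card (b \<union> c) \<le> n" using cardP[OF bc] .
        ultimately have "n - card (b \<union> c) < n - card b" by simp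
        then have lt: "n - card (b \<union> c) < N" using less(4) by simp
        have "a \<union> c \<subseteq> b \<union> c" using less(3) by auto
        then show "\<sigma> (a \<union> c) (b \<union> c) = \<rho> (a \<union> c) (b \<union> c)"
          using less.IH[OF lt bc _ refl] by blast
      qed
      have split: "ptrace n \<tau> b a b = \<tau> a b + (\<Sum>c\<in>?C - {{}}. \<tau> (a \<union> c) (b \<union> c))" for \<tau>
        unfolding ptrace_def using sum.remove[OF fin, of "{}" "\<lambda>c. \<tau> (a \<union> c) (b \<union> c)"] by simp
      show ?thesis using e split[of \<sigma>] split[of \<rho>] rest by simp
    qed
  qed
  have nested: "\<sigma> a b = \<rho> a b" if "b \<in> ?P" "a \<subseteq> b" for a b
    using nested_aux[OF that refl] .
  have diagE: "\<sigma> x x = \<rho> x x" if "x \<in> ?P" for x using nested[OF that] by simp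
  have adj: "\<sigma> z (insert p c) = \<sigma> z (insert q c)"
    if m2: "2 \<le> m" and pq: "p \<in> qubits n" "q \<in> qubits n" "p \<noteq> q" and c: "c \<in> Pow (qubits n - {p, q})"
      and z: "z \<in> ?P" for p q c z
  proof -
    let ?C = "Pow (qubits n - {p, q})"
    have xP: "insert p y \<in> ?P" "insert q y \<in> ?P" if "y \<in> ?C" for y using that pq by auto
    have cc: "card (insert p y) = card (insert q y)" if "y \<in> ?C" for y
    proof -
      have "finite y" using that by (auto intro: finite_subset)
      moreover have "p \<notin> y" "q \<notin> y" using that by auto
      ultimately show ?thesis by simp
    qed
    have dq: "\<sigma> (insert q y) (insert q y) = \<sigma> (insert p y) (insert p y)" if "y \<in> ?C" for y
      using diagE[OF xP(1)[OF that]] diagE[OF xP(2)[OF that]] rE[OF xP(1)[OF that] xP(1)[OF that]]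
        rE[OF xP(2)[OF that] xP(2)[OF that]] cc[OF that] by simp
    have e: "ptrace n \<sigma> {p, q} {p} {q} = ptrace n \<rho> {p, q} {p} {q}"
      by (rule ptr) (use pq m2 in auto)
    have pt: "ptrace n \<tau> {p, q} {p} {q} = (\<Sum>y\<in>?C. \<tau> (insert p y) (insert q y))" for \<tau>
      unfolding ptrace_def by simp
    have "(\<Sum>y\<in>?C. \<sigma> (insert p y) (insert q y)) = (\<Sum>y\<in>?C. \<rho> (insert p y) (insert q y))"
      using e pt by metis
    also have "\<dots> = (\<Sum>y\<in>?C. \<sigma> (insert p y) (insert p y))"
    proof (intro sum.cong refl)
      fix y assume y: "y \<in> ?C"
      show "\<rho> (insert p y) (insert q y) = \<sigma> (insert p y) (insert p y)"
        using rE[OF xP(1)[OF y] xP(2)[OF y]] rE[OF xP(1)[OF y] xP(1)[OF y]] cc[OF y] diagE[OF xP(1)[OF y]]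
        by simp
    qed
    finally have "(\<Sum>y\<in>?C. Re (\<sigma> (insert p y) (insert p y)) - Re (\<sigma> (insert p y) (insert q y))) = 0"
      by (simp add: sum_subtractf flip: Re_sum)
    moreover have le: "Re (\<sigma> (insert p y) (insert q y)) \<le> Re (\<sigma> (insert p y) (insert p y))" if "y \<in> ?C" for y
      using re_offdiag_le[OF dens xP(1)[OF that] xP(2)[OF that]] dq[OF that] by simp
    ultimately have "Re (\<sigma> (insert p c) (insert p c)) - Re (\<sigma> (insert p c) (insert q c)) = 0"
      using c by (subst (asm) sum_nonneg_eq_0_iff) auto
    then have reeq: "Re (\<sigma> (insert p c) (insert q c)) = Re (\<sigma> (insert p c) (insert p c))" by simp
    have herm: "\<sigma> (insert q c) (insert p c) = cnj (\<sigma> (insert p c) (insert q c))"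
      using density_herm[OF dens xP(1)[OF c] xP(2)[OF c]] .
    have impp: "Im (\<sigma> (insert p c) (insert p c)) = 0"
      using diag[OF xP(1)[OF c]] by (simp add: less_eq_complex_def)
    have "\<sigma> (insert p c) (insert p c) + \<sigma> (insert q c) (insert q c)
         - \<sigma> (insert p c) (insert q c) - \<sigma> (insert q c) (insert p c) = 0"
      using herm dq[OF c] reeq impp by (simp add: complex_eq_iff)
    then show ?thesis using diff_kernel[OF dens xP(1)[OF c] xP(2)[OF c] z] by simp
  qed
  have m2: "2 \<le> m" if "1 \<le> w" "w \<le> k" "w \<noteq> istar" for w
  proof (rule ccontr)
    assume "\<not> 2 \<le> m"
    then have "m \<le> 1" by simp
    then have h: "k + min ((k - istar) mod 2) (n - k) \<le> 1" using mdef by linarith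
    then have k1': "k = 1" using k1 by linarith
    have mz: "min ((k - istar) mod 2) (n - k) = 0" using h k1 by linarith
    have "istar = 0" using that ik k1' by auto
    then have A: "(k - istar) mod 2 = 1" using k1' by simp
    have B: "n - k \<ge> 1" using k1' n2 by simp
    have "min ((k - istar) mod 2) (n - k) \<ge> 1" unfolding min_def using A B by auto
    then show False using mz by simp
  qed
  have samecol: "\<sigma> z x = \<sigma> z x'"
    if "x \<in> ?P" "x' \<in> ?P" "card x = card x'" "z \<in> ?P" for x x' z
    using that
  proof (induction "card (x - x')" arbitrary: x rule: less_induct)
    case less
    show ?case
    proof (cases "\<sigma> x x = 0")
      case True
      have "\<rho> x' x' = \<rho> x x" using rE[OF less(3) less(3)] rE[OF less(2) less(2)] less(4) by simp
      then have "\<sigma> x' x' = 0"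
        using diagE[OF less(2)] diagE[OF less(3)] True by simp
      then show ?thesis
        using diag_zero_col[OF dens less(2) less(5) True] diag_zero_col[OF dens less(3) less(5)] by simp
    next
      case False
      show ?thesis
      proof (cases "x = x'")
        case True then show ?thesis by simp
      next
        case neq: False
        have finx: "finite x" "finite x'" using less by (auto intro: finite_subset)
        have "\<not> x \<subseteq> x'"
        proof
          assume "x \<subseteq> x'"
          then have "x = x'" using card_subset_eq[OF finx(2)] less(4) by auto
          then show False using neq by simp
        qed
        then obtain p where p: "p \<in> x" "p \<notin> x'" by auto
        have "\<not> x' \<subseteq> x"
        proof
          assume "x' \<subseteq> x"
          then have "x' = x" using card_subset_eq[OF finx(1)] less(4) by auto
          then show False using neq by simp
        qed
        then obtain q where q: "q \<in> x'" "q \<notin> x" by auto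
        have nz: "\<rho> x x \<noteq> 0" using False diagE[OF less(2)] by simp
        then have ck: "card x \<le> k" "lam (card x) \<noteq> 0" using rE[OF less(2) less(2)] by (auto split: if_splits)
        have "card x \<ge> 1" using p finx by (auto simp: card_gt_0_iff Suc_le_eq)
        moreover have "card x \<noteq> istar" using ck li by auto
        ultimately have mm: "2 \<le> m" using m2 ck by blast
        define c where "c = x - {p}"
        have xc: "x = insert p c" using p c_def by auto
        have cP: "c \<in> Pow (qubits n - {p, q})" using c_def q less(2) by auto
        have pq: "p \<in> qubits n" "q \<in> qubits n" "p \<noteq> q" using p q less by auto
        define x'' where "x'' = insert q c"
        have s1: "\<sigma> z x = \<sigma> z x''"
          unfolding xc x''_def by (rule adj[OF mm pq cP less(5)])
        have x''P: "x'' \<in> ?P" using x''_def cP pq by auto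
        have "card x'' = card x"
        proof -
          have "finite c" "p \<notin> c" "q \<notin> c" using finx c_def q by auto
          then show ?thesis using xc x''_def by simp
        qed
        then have cx'': "card x'' = card x'" using less(4) by simp
        have "x'' - x' = (x - x') - {p}" using x''_def c_def q p by auto
        then have "card (x'' - x') < card (x - x')"
        proof -
          have "finite (x - x')" using finx by simp
          moreover have "p \<in> x - x'" using p by simp
          ultimately have "card ((x - x') - {p}) < card (x - x')" by (rule card_Diff1_less)
          then show ?thesis using \<open>x'' - x' = (x - x') - {p}\<close> by simp
        qed
        then have "\<sigma> z x'' = \<sigma> z x'" using less.hyps x''P less(3) cx'' less(5) by blast
        then show ?thesis using s1 by simp
      qed
    qed
  qed
  have half: "\<sigma> y x = \<rho> y x" if x: "x \<in> ?P" and y: "y \<in> ?P" and cxy: "card x \<le> card y" for x y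
  proof (cases "k < card y")
    case True
    then show ?thesis using bigcol[OF y x True] rE[OF y x] by auto
  next
    case False
    have "card x \<le> card y" using cxy .
    then obtain x' where x': "x' \<subseteq> y" "card x' = card x"
      by (metis obtain_subset_with_card_n)
    have x'P: "x' \<in> ?P" using x' y by auto
    have "\<sigma> y x = \<sigma> y x'" using samecol[OF x x'P _ y] x' by simp
    also have "\<dots> = cnj (\<sigma> x' y)" using density_herm[OF dens x'P y] .
    also have "\<sigma> x' y = \<rho> x' y" using nested[OF y x'(1)] .
    also have "cnj (\<rho> x' y) = \<rho> y x" using rE[OF x'P y] rE[OF y x] x' by auto
    finally show ?thesis .
  qed
  fix x y assume x: "x \<in> ?P" and y: "y \<in> ?P"
  show "\<sigma> x y = dicke_mix n k lam x y"
  proof (cases "card x \<le> card y")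
    case True
    have "\<sigma> x y = cnj (\<sigma> y x)" using density_herm[OF dens y x] .
    also have "\<dots> = cnj (\<rho> y x)" using half[OF x y True] by simp
    also have "\<dots> = \<rho> x y" using rE[OF x y] rE[OF y x] by auto
    finally show ?thesis unfolding \<rho>_def .
  next
    case False
    then show ?thesis using half[OF y x] \<rho>_def by simp
  qed
qed



theorem proposition2:
  fixes n k istar :: nat and lam :: "nat \<Rightarrow> real"
  assumes "n \<ge> 2" and "1 \<le> k" and "k \<le> n"
    and "\<forall>i\<le>k. lam i \<ge> 0"
    and "(\<Sum>i=0..k. lam i) = 1"
    and "istar \<le> k" and "lam istar = 0"
    and "\<forall>i\<le>k. i \<noteq> istar \<longrightarrow> lam i \<noteq> 0"
  shows "sdl n (dicke_mix n k lam) = k + min ((k - istar) mod 2) (n - k)"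
  unfolding sdl_def
proof (rule Least_equality)
  show "\<exists>\<S>. determines n \<S> (dicke_mix n k lam) \<and> (\<forall>S\<in>\<S>. card S \<le> k + min ((k - istar) mod 2) (n - k))"
    using upper[OF assms refl] by blast
next
  fix y assume "\<exists>\<S>. determines n \<S> (dicke_mix n k lam) \<and> (\<forall>S\<in>\<S>. card S \<le> y)"
  then obtain \<S> where d: "determines n \<S> (dicke_mix n k lam)" and c: "\<forall>S\<in>\<S>. card S \<le> y" by blast
  show "k + min ((k - istar) mod 2) (n - k) \<le> y"
  proof (rule ccontr)
    assume "\<not> ?thesis"
    then have "\<forall>S\<in>\<S>. card S < k + min ((k - istar) mod 2) (n - k)" using c by fastforce
    then show False using lower[OF assms refl] d by blast
  qed
qed

end
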